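(* Consider the linear mixture $\textsc{lin}$ with parameter space the unit simplex $\mathcal{S}=\{\mathbf{w}\in\mathbb{R}^m:\mathbf{w}\ge0,\ \sum_iw_i=1\}$. Then for every probability matrix $\mathbf{P}$ over $\mathcal{P}_+$ and every $x\in\mathcal{X}$, the function $\mathbf{w}\mapsto\ell(x,\textsc{lin}(\mathbf{w},\mathbf{P}))$ is convex and differentiable on $\mathcal{S}$, and for all $\mathbf{w}\in\mathcal{S}$ $$\lvert\nabla_{\mathbf{w}}\ell(x,\textsc{lin}(\mathbf{w},\mathbf{P}))\rvert^2\le a\,\ell(x,\textsc{lin}(\mathbf{w},\mathbf{P}))$$ for every $a\ge m\log_2^2(e)\,\frac{p_{\max}(\mathbf{P})^2}{p_{\min}(\mathbf{P})^2\log_2(1/p_{\min}(\mathbf{P}))}$. In particular $\textsc{lin}$ satisfies the properties of a nice mixture, with the constant in the gradient condition given by this bound.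
   Context: $\mathcal{X}=\{1,\dots,N\}$, $1<N<\infty$; $\mathcal{P}_+$ is the set of distributions on $\mathcal{X}$ with positive probability on each letter; $m>1$. A probability matrix over $\mathcal{P}_+$ is $\mathbf{P}=(\mathbf{p}(1)\cdots\mathbf{p}(N))$ with $\mathbf{p}(x)=(p_1(x),\dots,p_m(x))^{\mathsf T}$, $p_i\in\mathcal{P}_+$. $p_{\max}(\mathbf{P}):=\max_{x}\max_{i}p_i(x)$, $p_{\min}(\mathbf{P}):=\min_{x}\min_{i}p_i(x)$. $\ell(x,p):=-\log_2p(x)$. The linear mixture is $\textsc{lin}(x;\mathbf{w},\mathbf{P}):=\mathbf{w}^{\mathsf T}\mathbf{p}(x)$ for $\mathbf{w}\in\mathcal{S}$. A mixture with parameter space $\mathcal{W}$ is nice if $\mathcal{W}$ is non-empty, compact, convex, $\mathbf{w}\mapsto\ell(x,\textsc{mix}(\mathbf{w},\mathbf{P}))$ is convex and differentiable on $\mathcal{W}$ for all $\mathbf{P},x$, and there is $a>0$ with $\lvert\nabla_{\mathbf{w}}\ell(x,\textsc{mix}(\mathbf{w},\mathbf{P}))\rvert^2\le a\,\ell(x,\textsc{mix}(\mathbf{w},\mathbf{P}))$ for all $\mathbf{w},\mathbf{P},x$. *)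

theory Defs
  imports "HOL-Analysis.Analysis"
begin

text \<open>Alphabet: a finite type 'x (N = CARD('x)); experts indexed by the finite type 'm
  (m = CARD('m)). A probability matrix P assigns to each letter x the column
  vector p(x) = (p_1(x),...,p_m(x)).\<close>

definition prob_matrix :: "('x::finite \<Rightarrow> real^'m::finite) \<Rightarrow> bool" where
  "prob_matrix P \<longleftrightarrow> (\<forall>x i. P x $ i > 0) \<and> (\<forall>i. (\<Sum>x\<in>UNIV. P x $ i) = 1)"

definition unit_simplex :: "(real^'m::finite) set" where
  "unit_simplex = {w. (\<forall>i. w $ i \<ge> 0) \<and> (\<Sum>i\<in>UNIV. w $ i) = 1}"

definition p_max :: "('x::finite \<Rightarrow> real^'m::finite) \<Rightarrow> real" where
  "p_max P = Max {P x $ i | x i. True}"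

definition p_min :: "('x::finite \<Rightarrow> real^'m::finite) \<Rightarrow> real" where
  "p_min P = Min {P x $ i | x i. True}"

definition code_loss :: "real \<Rightarrow> real" where
  "code_loss q = - log 2 q"

definition lin :: "'x \<Rightarrow> real^'m::finite \<Rightarrow> ('x \<Rightarrow> real^'m) \<Rightarrow> real" where
  "lin x w P = w \<bullet> P x"

end

theory Submission imports Defs begin
lemma A: "unit_simplex = (\<Inter>i. {w::real^'m::finite. 0 \<le> w $ i}) \<inter> {w. (\<Sum>i\<in>UNIV. w $ i) = 1}"
      unfolding unit_simplex_def by blast
lemma B: "closed {w::real^'m::finite. 0 \<le> w $ i}"
      by (intro closed_Collect_le continuous_intros)
lemma C: "closed {w::real^'m::finite. (\<Sum>i\<in>UNIV. w $ i) = 1}"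
      by (intro closed_Collect_eq continuous_intros)
lemma D: "closed (unit_simplex :: (real^'m::finite) set)"
  unfolding A using B C by (intro closed_Int closed_INT) auto
lemma E: "bounded (unit_simplex :: (real^'m::finite) set)"
    unfolding bounded_iff
  proof (intro exI ballI)
    fix w :: "real^'m" assume "w \<in> unit_simplex"
    then have "norm w \<le> (\<Sum>i\<in>UNIV. w $ i)"
      using norm_le_l1_cart[of w] by (simp add: unit_simplex_def)
    then show "norm w \<le> 1" using \<open>w \<in> unit_simplex\<close> by (simp add: unit_simplex_def)
  qed
lemma F: "convex (unit_simplex :: (real^'m::finite) set)"
    unfolding convex_def unit_simplex_def
  proof (intro ballI allI impI CollectI conjI)
    fix x y :: "real^'m" and u v :: real
    assume x: "x \<in> {w. (\<forall>i. 0 \<le> w $ i) \<and> (\<Sum>i\<in>UNIV. w $ i) = 1}"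
      and y: "y \<in> {w. (\<forall>i. 0 \<le> w $ i) \<and> (\<Sum>i\<in>UNIV. w $ i) = 1}"
      and uv: "0 \<le> u" "0 \<le> v" "u + v = 1"
    show "0 \<le> (u *\<^sub>R x + v *\<^sub>R y) $ i" for i using x y uv by simp
    have "(\<Sum>i\<in>UNIV. (u *\<^sub>R x + v *\<^sub>R y) $ i) = u * (\<Sum>i\<in>UNIV. x $ i) + v * (\<Sum>i\<in>UNIV. y $ i)"
      by (simp add: sum.distrib sum_distrib_left)
    then show "(\<Sum>i\<in>UNIV. (u *\<^sub>R x + v *\<^sub>R y) $ i) = 1" using x y uv by simp
  qed
lemma G: "(unit_simplex :: (real^'m::finite) set) \<noteq> {}"
proof -
  have "((\<chi> i. 1 / real CARD('m)) :: real^'m) \<in> unit_simplex" by (simp add: unit_simplex_def)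
  then show ?thesis by blast
qed
lemma simplex_facts: "(unit_simplex :: (real^'m::finite) set) \<noteq> {}" "compact (unit_simplex :: (real^'m::finite) set)"
   "convex (unit_simplex :: (real^'m::finite) set)"
  using G D E F by (auto simp: compact_eq_bounded_closed)

definition gg :: "real \<Rightarrow> real" where "gg s = - (s^2 * ln s)"

lemma gg_deriv: "s > 0 \<Longrightarrow> (gg has_real_derivative (s * (-2 * ln s - 1))) (at s)"
  unfolding gg_def
  apply (rule derivative_eq_intros refl | simp)+
  apply (simp add: algebra_simps power2_eq_square)
  done

lemma gg_up: assumes "0 < a" "a \<le> b" "b \<le> exp (-1/2)" shows "gg a \<le> gg b"
proof (rule DERIV_nonneg_imp_nondecreasing[OF assms(2)])
  fix x assume x: "a \<le> x" "x \<le> b"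
  then have xp: "x > 0" using assms by linarith
  have "ln x \<le> ln (exp (-1/2))" using x assms xp by (subst ln_le_cancel_iff) auto
  then have "ln x \<le> -1/2" by simp
  then have "0 \<le> x * (-2 * ln x - 1)" using xp by (intro mult_nonneg_nonneg) auto
  then show "\<exists>y. DERIV gg x :> y \<and> 0 \<le> y" using gg_deriv[OF xp] by blast
qed

lemma gg_down: assumes "exp (-1/2) \<le> a" "a \<le> b" shows "gg b \<le> gg a"
proof -
  have "- gg a \<le> - gg b"
  proof (rule DERIV_nonneg_imp_nondecreasing[OF assms(2)])
    fix x assume x: "a \<le> x" "x \<le> b"
    have "exp (-1/2) > (0::real)" by simp
    then have xp: "x > 0" using x assms by linarith
    have "ln (exp (-1/2)) \<le> ln x" using x assms xp by (subst ln_le_cancel_iff) auto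
    then have "ln x \<ge> -1/2" by simp
    then have "0 \<le> - (x * (-2 * ln x - 1))" using xp
      by (simp add: mult_nonneg_nonpos)
    then show "\<exists>y. DERIV (\<lambda>x. - gg x) x :> y \<and> 0 \<le> y"
      using DERIV_minus[OF gg_deriv[OF xp]] by blast
  qed
  then show ?thesis by simp
qed

lemma s_ln_bound: assumes "(s::real) > 0" shows "- (s * ln s) \<le> exp (-1)"
proof -
  have "ln (1/(s * exp 1)) \<le> 1/(s*exp 1) - 1" using assms by (intro ln_le_minus_one) auto
  then have "- ln s - 1 \<le> 1/(s*exp 1) - 1" using assms by (simp add: ln_div ln_mult)
  then have "- ln s \<le> 1/(s*exp 1)" by simp
  then have "s * (- ln s) \<le> s * (1/(s*exp 1))" using assms by (intro mult_left_mono) auto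
  then show ?thesis using assms by (simp add: exp_minus field_simps)
qed

lemma gg_sym: assumes "0 < t" "t \<le> 1/2" shows "gg t \<le> gg (1 - t)"
proof (cases "t \<le> 1 - exp (-1/2)")
  case True
  have e: "exp (-1/2) \<le> 1 - t" using True by simp
  have "exp (-1) = (exp (-1/2::real))^2" by (simp add: power2_eq_square exp_add[symmetric])
  also have "\<dots> \<le> (1-t)^2" using e by (intro power_mono) auto
  finally have e2: "exp (-1) \<le> (1-t)^2" .
  have "gg t = t * (- (t * ln t))" by (simp add: gg_def power2_eq_square)
  also have "\<dots> \<le> t * exp (-1)" using s_ln_bound[OF assms(1)] assms by (intro mult_left_mono) auto
  also have "\<dots> \<le> t * (1-t)^2" using e2 assms by (intro mult_left_mono) auto
  also have "\<dots> \<le> gg (1-t)"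
  proof -
    have "ln (1-t) \<le> (1-t) - 1" using assms by (intro ln_le_minus_one) auto
    then have "t \<le> - ln (1-t)" by simp
    then have "(1-t)^2 * t \<le> (1-t)^2 * (- ln(1-t))" by (intro mult_left_mono) auto
    then show ?thesis by (simp add: gg_def mult.commute)
  qed
  finally show ?thesis .
next
  case False
  have "exp (-1/2) \<ge> (1/2::real)"
  proof -
    have "1 + (-1/2) \<le> exp (-1/2::real)" by (rule exp_ge_add_one_self)
    then show ?thesis by simp
  qed
  then show ?thesis using False assms by (intro gg_up) auto
qed

lemma gg_main: assumes "0 < t" "t \<le> s" "s \<le> 1 - t" shows "gg t \<le> gg s"
proof (cases "s \<le> exp (-1/2)")
  case True then show ?thesis using assms by (intro gg_up) auto
next
  case False
  have h: "exp (-1/2) \<ge> (1/2::real)"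
  proof -
    have "1 + (-1/2) \<le> exp (-1/2::real)" by (rule exp_ge_add_one_self)
    then show ?thesis by simp
  qed
  have "gg (1 - t) \<le> gg s" using False assms by (intro gg_down) auto
  moreover have "gg t \<le> gg (1-t)" using assms False h by (intro gg_sym) auto
  ultimately show ?thesis by simp
qed



theorem lemma2:
  fixes P :: "'x::finite \<Rightarrow> real^'m::finite" and x :: 'x and a :: real
  assumes N: "CARD('x) > 1" and M: "CARD('m) > 1"
    and P: "prob_matrix P"
    and a: "a \<ge> real CARD('m) * (log 2 (exp 1))\<^sup>2 * (p_max P)\<^sup>2
               / ((p_min P)\<^sup>2 * log 2 (1 / p_min P))"
  shows "unit_simplex \<noteq> {} \<and> compact (unit_simplex :: (real^'m) set)
         \<and> convex (unit_simplex :: (real^'m) set)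
         \<and> convex_on unit_simplex (\<lambda>w. code_loss (lin x w P))
         \<and> (\<forall>w\<in>unit_simplex. (\<lambda>v. code_loss (lin x v P)) differentiable (at w))
         \<and> (\<forall>w\<in>unit_simplex. \<exists>g. ((\<lambda>v. code_loss (lin x v P)) has_derivative (\<lambda>h. g \<bullet> h)) (at w)
                \<and> (norm g)\<^sup>2 \<le> a * code_loss (lin x w P))"
proof -
  define p where "p = P x"
  define t where "t = p_min P"
  define pm where "pm = p_max P"
  have Sset: "{P x $ i | x i. True} = (\<lambda>(x,i). P x $ i) ` UNIV" by auto
  have fin: "finite {P x $ i | x i. True}" unfolding Sset by simp
  have ne: "{P x $ i | x i. True} \<noteq> {}" by auto
  have tle: "t \<le> P y $ j" for y j unfolding t_def p_min_def by (rule Min_le[OF fin]) auto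
  have tin: "t \<in> {P x $ i | x i. True}" unfolding t_def p_min_def using fin ne by (rule Min_in)
  have pos: "P y $ j > 0" for y j using P by (simp add: prob_matrix_def)
  have tpos: "t > 0" using tin pos by auto
  have pmle: "P y $ j \<le> pm" for y j unfolding pm_def p_max_def by (rule Max_ge[OF fin]) auto
  obtain x' where x': "x' \<noteq> x"
  proof -
    have "\<exists>y. y \<noteq> x"
    proof (rule ccontr)
      assume "\<not> (\<exists>y. y \<noteq> x)"
      then have "(UNIV :: 'x set) = {x}" by auto
      then have "CARD('x) = card {x}" by (simp only:)
      then show False using N by simp
    qed
    then show ?thesis using that by blast
  qed
  have p1t: "p $ j \<le> 1 - t" for j
  proof -
    have "(\<Sum>y\<in>{x,x'}. P y $ j) \<le> (\<Sum>y\<in>UNIV. P y $ j)"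
      by (rule sum_mono2) (auto intro: less_imp_le[OF pos])
    also have "\<dots> = 1" using P by (simp add: prob_matrix_def)
    finally have "P x $ j + P x' $ j \<le> 1" using x' by simp
    then show ?thesis using tle[of x' j] by (simp add: p_def)
  qed
  have pt: "t \<le> p $ j" for j unfolding p_def by (rule tle)
  have thalf: "t \<le> 1/2" using p1t[of undefined] pt[of undefined] by simp
  have sfacts: "t \<le> w \<bullet> p \<and> w \<bullet> p \<le> 1 - t" if w: "w \<in> unit_simplex" for w
  proof -
    have w0: "0 \<le> w $ i" for i using w by (simp add: unit_simplex_def)
    have w1: "(\<Sum>i\<in>UNIV. w $ i) = 1" using w by (simp add: unit_simplex_def)
    have e: "w \<bullet> p = (\<Sum>i\<in>UNIV. w $ i * p $ i)" by (simp add: inner_vec_def)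
    have "t = (\<Sum>i\<in>UNIV. w $ i * t)" using w1 by (simp add: sum_distrib_right[symmetric])
    also have "\<dots> \<le> (\<Sum>i\<in>UNIV. w $ i * p $ i)"
      by (rule sum_mono) (intro mult_left_mono pt w0)
    finally have 1: "t \<le> w \<bullet> p" using e by simp
    have "(\<Sum>i\<in>UNIV. w $ i * p $ i) \<le> (\<Sum>i\<in>UNIV. w $ i * (1 - t))"
      by (rule sum_mono) (intro mult_left_mono p1t w0)
    also have "\<dots> = 1 - t" using w1 by (simp add: sum_distrib_right[symmetric])
    finally show ?thesis using 1 e by simp
  qed
  have lin_eq: "lin x v P = v \<bullet> p" for v by (simp add: lin_def p_def)
  have cvx: "convex_on unit_simplex (\<lambda>w. code_loss (lin x w P))"
  proof (rule convex_onI)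
    show "convex (unit_simplex :: (real^'m) set)" by (rule F)
    fix \<theta> :: real and u v :: "real^'m"
    assume th: "0 < \<theta>" "\<theta> < 1" and u: "u \<in> unit_simplex" and v: "v \<in> unit_simplex"
    have "u \<bullet> p \<in> {0<..}" "v \<bullet> p \<in> {0<..}" using sfacts[OF u] sfacts[OF v] tpos by auto
    from convex_onD[OF minus_log_convex[of 2] _ _ this] th
    have "- log 2 ((1 - \<theta>) * (u \<bullet> p) + \<theta> * (v \<bullet> p)) \<le> (1 - \<theta>) * - log 2 (u \<bullet> p) + \<theta> * - log 2 (v \<bullet> p)"
      by simp
    then show "code_loss (lin x ((1 - \<theta>) *\<^sub>R u + \<theta> *\<^sub>R v) P) \<le> (1 - \<theta>) * code_loss (lin x u P) + \<theta> * code_loss (lin x v P)"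
      by (simp add: lin_eq code_loss_def inner_add_left)
  qed
  have der: "\<exists>g. ((\<lambda>v. code_loss (lin x v P)) has_derivative (\<lambda>h. g \<bullet> h)) (at w)
                \<and> (norm g)\<^sup>2 \<le> a * code_loss (lin x w P)" if w: "w \<in> unit_simplex" for w
  proof -
    define s where "s = w \<bullet> p"
    have st: "t \<le> s" "s \<le> 1 - t" using sfacts[OF w] by (auto simp: s_def)
    have spos: "s > 0" using st tpos by simp
    define L where "L = ln (2::real)"
    have Lpos: "L > 0" by (simp add: L_def)
    define g where "g = (- 1 / (L * s)) *\<^sub>R p"
    have d1: "((\<lambda>v. v \<bullet> p) has_derivative (\<lambda>h. h \<bullet> p)) (at w)"
      by (rule has_derivative_inner_left[OF has_derivative_ident])
    have d2: "((\<lambda>v. ln (v \<bullet> p)) has_derivative (\<lambda>h. (h \<bullet> p) * inverse s)) (at w)"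
      using DERIV_compose_FDERIV[OF DERIV_ln[OF spos[unfolded s_def]] d1] by (simp add: s_def)
    have d3: "((\<lambda>v. (-1/L) * ln (v \<bullet> p)) has_derivative (\<lambda>h. (-1/L) * ((h \<bullet> p) * inverse s))) (at w)"
      by (rule has_derivative_mult_right[OF d2])
    have e1: "(\<lambda>v. code_loss (lin x v P)) = (\<lambda>v. (-1/L) * ln (v \<bullet> p))"
      by (auto simp: code_loss_def lin_eq log_def L_def)
    have e2: "(\<lambda>h. g \<bullet> h) = (\<lambda>h. (-1/L) * ((h \<bullet> p) * inverse s))"
      by (auto simp: g_def inner_commute field_simps)
    have d: "((\<lambda>v. code_loss (lin x v P)) has_derivative (\<lambda>h. g \<bullet> h)) (at w)"
      using d3 unfolding e1 e2 .
    define N2 where "N2 = (\<Sum>i\<in>UNIV. (p $ i)^2)"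
    have np: "(norm p)^2 = N2"
      unfolding power2_norm_eq_inner inner_vec_def N2_def by (simp add: power2_eq_square)
    have nrm: "(norm g)^2 = N2 / (L * s)^2"
      unfolding g_def norm_scaleR power_mult_distrib power2_abs np by (simp add: power_divide power_mult_distrib)
    have N2le: "N2 \<le> real CARD('m) * pm^2"
    proof -
      have "N2 \<le> (\<Sum>i\<in>(UNIV::'m set). pm^2)" unfolding N2_def
        by (rule sum_mono, rule power_mono) (auto simp: p_def pmle less_imp_le[OF pos])
      then show ?thesis by simp
    qed
    have cl: "code_loss (lin x w P) = - ln s / L"
      by (simp add: code_loss_def lin_eq log_def L_def s_def)
    have s1: "s < 1" using st tpos by simp
    have lns: "- ln s \<ge> 0" using s1 spos by simp
    have t1: "t < 1" using thalf by simp
    have lnt: "- ln t > 0" using t1 tpos by simp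
    have ggm: "gg t \<le> gg s" using gg_main[OF tpos st] .
    have aeq: "real CARD('m) * (log 2 (exp 1))\<^sup>2 * (p_max P)\<^sup>2 / ((p_min P)\<^sup>2 * log 2 (1 / p_min P))
       = real CARD('m) * pm^2 / (L * (t^2 * (- ln t)))"
      using Lpos tpos by (simp add: log_def L_def t_def pm_def ln_div field_simps power2_eq_square)
    have aA: "a \<ge> real CARD('m) * pm^2 / (L * (t^2 * (- ln t)))" using a aeq by simp
    have tt: "t^2 * (- ln t) > 0" using tpos lnt by (intro mult_pos_pos) auto
    have key: "1 / s^2 \<le> (- ln s) / (t^2 * (- ln t))"
    proof -
      have "t^2 * (- ln t) \<le> s^2 * (- ln s)" using ggm by (simp add: gg_def)
      then show ?thesis using tt spos by (simp add: field_simps)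
    qed
    have "(norm g)^2 = N2 / (L * s)^2" by (rule nrm)
    also have "\<dots> \<le> real CARD('m) * pm^2 / (L * s)^2"
      using N2le Lpos spos by (intro divide_right_mono) auto
    also have "\<dots> = (real CARD('m) * pm^2 / L^2) * (1 / s^2)" by (simp add: field_simps power_mult_distrib)
    also have "\<dots> \<le> (real CARD('m) * pm^2 / L^2) * ((- ln s) / (t^2 * (- ln t)))"
      using key Lpos by (intro mult_left_mono) auto
    also have "\<dots> = (real CARD('m) * pm^2 / (L * (t^2 * (- ln t)))) * (- ln s / L)"
      using Lpos tt by (simp add: field_simps power2_eq_square)
    also have "\<dots> \<le> a * (- ln s / L)"
      using aA lns Lpos by (intro mult_right_mono) (auto simp: divide_nonpos_pos)
    finally have "(norm g)^2 \<le> a * code_loss (lin x w P)" unfolding cl .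
    then show ?thesis using d by blast
  qed
  show ?thesis using simplex_facts cvx der by (auto intro: differentiableI)
qed

end
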